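(* Let $G=(U\cup W,E)$ be a connected bipartite graph with bipartition $U,W$ and $|U|<|W|$. Then the following are equivalent: (i) $G$ is an edge-stable equimatchable graph; (ii) every vertex of $U$ is square-strong; (iii) for every $u\in U$ there exists a nonempty set $S\subseteq N(u)$ such that $|N(S)|\le |S|-1$.
   Context: All graphs are finite and simple. A graph is equimatchable if all its maximal matchings have the same cardinality; an equimatchable graph $G$ is edge-stable if $G\setminus e$ (delete edge $e$, keep vertices) is equimatchable for every $e\in E(G)$. A vertex $v$ of a graph $G$ is strong if every maximal matching of $G$ saturates $v$ (i.e. $v$ is an endpoint of an edge of the matching). A strong vertex $v$ is square-strong if for every $u\in N(v)$, $v$ is strong in $G-u$. $N(u)$ is the neighborhood of $u$, and for a set $S$, $N(S)$ is the union of the neighborhoods of vertices of $S$. *)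

theory Defs
  imports Main
begin

definition simple_graph :: "'a set \<Rightarrow> 'a set set \<Rightarrow> bool" where
  "simple_graph V E \<longleftrightarrow> finite V \<and> (\<forall>e\<in>E. e \<subseteq> V \<and> card e = 2)"

definition connected_graph :: "'a set \<Rightarrow> 'a set set \<Rightarrow> bool" where
  "connected_graph V E \<longleftrightarrow> V \<noteq> {} \<and>
     (\<forall>x\<in>V. \<forall>y\<in>V. (x, y) \<in> {(a, b). {a, b} \<in> E}\<^sup>*)"

definition bipartition :: "'a set \<Rightarrow> 'a set set \<Rightarrow> 'a set \<Rightarrow> 'a set \<Rightarrow> bool" where
  "bipartition V E U W \<longleftrightarrow> U \<inter> W = {} \<and> U \<union> W = V \<and>
     (\<forall>e\<in>E. \<exists>u\<in>U. \<exists>w\<in>W. e = {u, w})"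

definition matching :: "'a set set \<Rightarrow> 'a set set \<Rightarrow> bool" where
  "matching E M \<longleftrightarrow> M \<subseteq> E \<and> (\<forall>e\<in>M. \<forall>f\<in>M. e \<noteq> f \<longrightarrow> e \<inter> f = {})"

definition maximal_matching :: "'a set set \<Rightarrow> 'a set set \<Rightarrow> bool" where
  "maximal_matching E M \<longleftrightarrow> matching E M \<and> (\<forall>e\<in>E - M. \<not> matching E (insert e M))"

definition equimatchable :: "'a set set \<Rightarrow> bool" where
  "equimatchable E \<longleftrightarrow>
     (\<forall>M M'. maximal_matching E M \<and> maximal_matching E M' \<longrightarrow> card M = card M')"

text \<open>Edge deletion keeps all vertices; matchings only depend on the edge set.\<close>
definition edge_stable_equimatchable :: "'a set set \<Rightarrow> bool" where
  "edge_stable_equimatchable E \<longleftrightarrow> equimatchable E \<and> (\<forall>e\<in>E. equimatchable (E - {e}))"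

definition strong_vertex :: "'a set set \<Rightarrow> 'a \<Rightarrow> bool" where
  "strong_vertex E v \<longleftrightarrow> (\<forall>M. maximal_matching E M \<longrightarrow> v \<in> \<Union>M)"

definition delete_vertex :: "'a set set \<Rightarrow> 'a \<Rightarrow> 'a set set" where
  "delete_vertex E u = {e\<in>E. u \<notin> e}"

definition nbhd :: "'a set set \<Rightarrow> 'a \<Rightarrow> 'a set" where
  "nbhd E u = {w. {u, w} \<in> E}"

definition nbhd_set :: "'a set set \<Rightarrow> 'a set \<Rightarrow> 'a set" where
  "nbhd_set E S = (\<Union>u\<in>S. nbhd E u)"

definition square_strong :: "'a set set \<Rightarrow> 'a \<Rightarrow> bool" where
  "square_strong E v \<longleftrightarrow> strong_vertex E v \<and>
     (\<forall>u\<in>nbhd E v. strong_vertex (delete_vertex E u) v)"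

end

theory Submission
  imports Defs
begin


lemma hall:
  fixes A :: "'a \<Rightarrow> 'b set"
  assumes "finite X" "\<forall>x\<in>X. finite (A x)" "\<forall>T\<subseteq>X. card T \<le> card (\<Union>(A ` T))"
  shows "\<exists>f. inj_on f X \<and> (\<forall>x\<in>X. f x \<in> A x)"
  using assms
proof (induction "card X" arbitrary: X A rule: less_induct)
  case less
  show ?case
  proof (cases "X = {}")
    case True then show ?thesis by auto
  next
    case False
    show ?thesis
    proof (cases "\<exists>T. T \<subseteq> X \<and> T \<noteq> {} \<and> T \<noteq> X \<and> card (\<Union>(A ` T)) \<le> card T")
      case True
      then obtain T where T: "T \<subseteq> X" "T \<noteq> {}" "T \<noteq> X" "card (\<Union>(A ` T)) \<le> card T" by blast
      have finT: "finite T" using T(1) less.prems(1) finite_subset by blast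
      have cT: "card T < card X" using T(1,3) less.prems(1) by (meson psubsetI psubset_card_mono)
      have h1: "\<forall>T'\<subseteq>T. card T' \<le> card (\<Union>(A ` T'))" using less.prems(3) T(1) by blast
      have h2: "\<forall>x\<in>T. finite (A x)" using less.prems(2) T(1) by (meson subsetD)
      obtain f1 where f1: "inj_on f1 T" "\<forall>x\<in>T. f1 x \<in> A x"
        using less.hyps[OF cT finT h2 h1] by blast
      define B where "B = (\<Union>(A ` T))"
      define A' where "A' = (\<lambda>x. A x - B)"
      have cXT: "card (X - T) < card X" using T(1,2) less.prems(1)
      proof -
        have "X - T \<subset> X" using T(1,2) by blast
        then show ?thesis using less.prems(1) by (simp add: psubset_card_mono)
      qed
      have hall2: "\<forall>R\<subseteq>X-T. card R \<le> card (\<Union>(A' ` R))"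
      proof (intro allI impI)
        fix R assume R: "R \<subseteq> X - T"
        have e1: "\<Union>(A' ` R) = \<Union>(A ` (R \<union> T)) - B" unfolding A'_def B_def by auto
        have finRT: "finite (R \<union> T)" using R finT less.prems(1) finite_subset by auto
        have fin2: "finite (\<Union>(A ` (R \<union> T)))" using finRT R T(1) less.prems(2) by auto
        have sub: "B \<subseteq> \<Union>(A ` (R \<union> T))" unfolding B_def by auto
        have c1: "card (\<Union>(A' ` R)) = card (\<Union>(A ` (R \<union> T))) - card B"
          using e1 sub fin2 by (simp add: card_Diff_subset finite_subset)
        have c2: "card (R \<union> T) \<le> card (\<Union>(A ` (R \<union> T)))"
        proof -
          have "R \<union> T \<subseteq> X" using R T(1) by blast
          then show ?thesis using less.prems(3) by blast
        qed
        have c3: "card (R \<union> T) = card R + card T"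
          using R finRT by (intro card_Un_disjoint) auto
        have c4: "card B \<le> card T" using T(4) B_def by simp
        show "card R \<le> card (\<Union>(A' ` R))" using c1 c2 c3 c4 by linarith
      qed
      obtain f2 where f2: "inj_on f2 (X - T)" "\<forall>x\<in>X-T. f2 x \<in> A' x"
        using less.hyps[OF cXT, of A'] hall2 less.prems unfolding A'_def by auto
      define f where "f = (\<lambda>x. if x \<in> T then f1 x else f2 x)"
      have "inj_on f X"
      proof (rule inj_onI)
        fix x y assume xy: "x \<in> X" "y \<in> X" "f x = f y"
        have inB: "\<And>z. z \<in> T \<Longrightarrow> f1 z \<in> B" using f1(2) B_def by auto
        have ninB: "\<And>z. z \<in> X - T \<Longrightarrow> f2 z \<notin> B" using f2(2) A'_def by auto
        show "x = y"
        proof (cases "x \<in> T"; cases "y \<in> T")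
          assume "x \<in> T" "y \<in> T" then show ?thesis using xy f1(1) f_def by (auto dest: inj_onD)
        next
          assume "x \<in> T" "y \<notin> T" then show ?thesis using xy f_def inB ninB by force
        next
          assume "x \<notin> T" "y \<in> T" then show ?thesis using xy f_def inB ninB by force
        next
          assume "x \<notin> T" "y \<notin> T" then show ?thesis using xy f2(1) f_def by (auto dest: inj_onD)
        qed
      qed
      moreover have "\<forall>x\<in>X. f x \<in> A x" using f1 f2 f_def A'_def by auto
      ultimately show ?thesis by blast
    next
      case False
      then have big: "\<And>T. T \<subseteq> X \<Longrightarrow> T \<noteq> {} \<Longrightarrow> T \<noteq> X \<Longrightarrow> card T < card (\<Union>(A ` T))"
        by (meson not_le)
      obtain x where x: "x \<in> X" using \<open>X \<noteq> {}\<close> by blast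
      have "card {x} \<le> card (\<Union>(A ` {x}))" using less.prems(3) x by blast
      then have "card {x} \<le> card (A x)" by simp
      then obtain y where y: "y \<in> A x" by fastforce
      define A' where "A' = (\<lambda>z. A z - {y})"
      have cX: "card (X - {x}) < card X" using x less.prems(1) by (meson card_Diff1_less)
      have hall2: "\<forall>T\<subseteq>X-{x}. card T \<le> card (\<Union>(A' ` T))"
      proof (intro allI impI)
        fix T assume T: "T \<subseteq> X - {x}"
        show "card T \<le> card (\<Union>(A' ` T))"
        proof (cases "T = {}")
          case True then show ?thesis by simp
        next
          case False
          have "T \<noteq> X" using T x by auto
          then have b: "card T < card (\<Union>(A ` T))" using big T False by auto
          have e: "\<Union>(A' ` T) = \<Union>(A ` T) - {y}" unfolding A'_def by auto
          have "card (\<Union>(A ` T)) - 1 \<le> card (\<Union>(A ` T) - {y})"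
            by (metis card_Diff_singleton_if diff_le_self order_refl)
          then show ?thesis using b e by (simp only: e)
        qed
      qed
      obtain f' where f': "inj_on f' (X - {x})" "\<forall>z\<in>X-{x}. f' z \<in> A' z"
        using less.hyps[OF cX, of A'] hall2 less.prems unfolding A'_def by auto
      define f where "f = f'(x := y)"
      have "inj_on f X"
      proof (rule inj_onI)
        fix a b assume ab: "a \<in> X" "b \<in> X" "f a = f b"
        show "a = b"
        proof (cases "a = x"; cases "b = x")
          assume "a \<noteq> x" "b \<noteq> x" then show ?thesis using ab f'(1) f_def by (auto dest: inj_onD)
        qed (use ab f' f_def A'_def in auto)
      qed
      moreover have "\<forall>z\<in>X. f z \<in> A z" using f' y f_def A'_def by auto
      ultimately show ?thesis by blast
    qed
  qed
qed


definition bip :: "'a set \<Rightarrow> 'a set \<Rightarrow> 'a set set \<Rightarrow> bool" where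
  "bip U W F \<longleftrightarrow> U \<inter> W = {} \<and> (\<forall>e\<in>F. \<exists>a\<in>U. \<exists>b\<in>W. e = {a,b})"

lemma matching_mono: "matching F M \<Longrightarrow> M' \<subseteq> M \<Longrightarrow> M' \<subseteq> F' \<Longrightarrow> matching F' M'"
  unfolding matching_def by blast

lemma not_matching_insert:
  assumes "matching F M" "e \<in> F" "\<not> matching F (insert e M)"
  shows "\<exists>m\<in>M. m \<noteq> e \<and> m \<inter> e \<noteq> {}"
  using assms unfolding matching_def by blast

lemma maximal_cover:
  assumes "maximal_matching F M" "e \<in> F" "e \<notin> M"
  shows "\<exists>m\<in>M. m \<noteq> e \<and> m \<inter> e \<noteq> {}"
  using assms not_matching_insert unfolding maximal_matching_def by blast

lemma maximal_if_cover:
  assumes "matching F M" "\<forall>e\<in>F-M. \<exists>m\<in>M. m \<inter> e \<noteq> {}"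
  shows "maximal_matching F M"
  unfolding maximal_matching_def
proof (intro conjI ballI notI)
  show "matching F M" using assms(1) .
next
  fix e assume e: "e \<in> F - M" and mi: "matching F (insert e M)"
  obtain m where m: "m \<in> M" "m \<inter> e \<noteq> {}" using assms(2) e by blast
  have "m \<noteq> e" using m e by blast
  then have "m \<inter> e = {}" using mi m unfolding matching_def by blast
  then show False using m by blast
qed

lemma extend_maximal:
  assumes "finite F" "matching F M0"
  shows "\<exists>M. maximal_matching F M \<and> M0 \<subseteq> M"
proof -
  let ?P = "\<lambda>M. matching F M \<and> M0 \<subseteq> M"
  have bnd: "\<forall>M. ?P M \<longrightarrow> card M \<le> card F"
    using assms(1) unfolding matching_def by (auto intro: card_mono)
  obtain M where M: "?P M" "\<forall>M'. ?P M' \<longrightarrow> card M' \<le> card M"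
  proof -
    have bnd': "\<forall>M. ?P M \<longrightarrow> card M < card F + 1" using bnd by auto
    show ?thesis using ex_has_greatest_nat[of ?P M0 card "card F + 1"] assms(2) bnd' that by blast
  qed
  have "maximal_matching F M"
    unfolding maximal_matching_def
  proof (intro conjI ballI notI)
    show "matching F M" using M by simp
  next
    fix e assume e: "e \<in> F - M" and mi: "matching F (insert e M)"
    have "finite M" using M(1) assms(1) unfolding matching_def by (auto intro: finite_subset)
    then have "card (insert e M) = card M + 1" using e by simp
    moreover have "card (insert e M) \<le> card M" using M(2) mi M(1) by blast
    ultimately show False by simp
  qed
  then show ?thesis using M by blast
qed

lemma mk_matching:
  assumes "\<forall>x\<in>X. {x, g x} \<in> F" "\<forall>x\<in>X. g x \<notin> X" "inj_on g X"
  shows "matching F ((\<lambda>x. {x, g x}) ` X)"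
  unfolding matching_def
proof (intro conjI ballI impI)
  show "(\<lambda>x. {x, g x}) ` X \<subseteq> F" using assms(1) by blast
next
  fix e f assume "e \<in> (\<lambda>x. {x, g x}) ` X" "f \<in> (\<lambda>x. {x, g x}) ` X" "e \<noteq> f"
  then obtain x y where xy: "x \<in> X" "y \<in> X" "e = {x, g x}" "f = {y, g y}" "x \<noteq> y" by blast
  have "g x \<noteq> g y" using xy assms(3) by (meson inj_onD)
  then show "e \<inter> f = {}" using xy assms(2) by auto
qed

lemma mk_card:
  assumes "\<forall>x\<in>X. g x \<notin> X"
  shows "card ((\<lambda>x. {x, g x}) ` X) = card X"
proof (rule card_image)
  show "inj_on (\<lambda>x. {x, g x}) X"
  proof (rule inj_onI)
    fix x y assume "x \<in> X" "y \<in> X" "{x, g x} = {y, g y}"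
    then show "x = y" using assms by (metis doubleton_eq_iff)
  qed
qed

lemma mk_cover: "X \<subseteq> \<Union>((\<lambda>x. {x, g x}) ` X)" by blast

lemma bip_edge: "bip U W F \<Longrightarrow> e \<in> F \<Longrightarrow> \<exists>a\<in>U. \<exists>b\<in>W. e = {a,b}"
  unfolding bip_def by blast

lemma card_matching:
  assumes "bip U W F" "matching F M"
  shows "card M = card (U \<inter> \<Union>M)"
proof -
  have UW: "U \<inter> W = {}" using assms(1) unfolding bip_def by blast
  have key: "\<And>e. e \<in> M \<Longrightarrow> \<exists>a. U \<inter> e = {a}"
  proof -
    fix e assume "e \<in> M"
    then have "e \<in> F" using assms(2) unfolding matching_def by blast
    then obtain a b where "a \<in> U" "b \<in> W" "e = {a,b}" using bip_edge[OF assms(1)] by blast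
    then have "U \<inter> e = {a}" using UW by blast
    then show "\<exists>a. U \<inter> e = {a}" by blast
  qed
  define h where "h = (\<lambda>e. the_elem (U \<inter> e))"
  have hk: "\<And>e. e \<in> M \<Longrightarrow> U \<inter> e = {h e}"
  proof -
    fix e assume "e \<in> M"
    then obtain a where "U \<inter> e = {a}" using key by blast
    then show "U \<inter> e = {h e}" unfolding h_def by simp
  qed
  have hk1: "\<And>e. e \<in> M \<Longrightarrow> h e \<in> U \<and> h e \<in> e"
  proof -
    fix e assume "e \<in> M"
    then have "h e \<in> U \<inter> e" using hk by (metis singletonI)
    then show "h e \<in> U \<and> h e \<in> e" by simp
  qed
  have hk2: "\<And>e y. e \<in> M \<Longrightarrow> y \<in> U \<Longrightarrow> y \<in> e \<Longrightarrow> y = h e"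
  proof -
    fix e y assume "e \<in> M" "y \<in> U" "y \<in> e"
    then have "y \<in> U \<inter> e" by simp
    then show "y = h e" using hk[OF \<open>e \<in> M\<close>] by simp
  qed
  have disj: "\<forall>e\<in>M. \<forall>f\<in>M. e \<noteq> f \<longrightarrow> e \<inter> f = {}" using assms(2) unfolding matching_def by simp
  have "bij_betw h M (U \<inter> \<Union>M)"
    unfolding bij_betw_def
  proof
    show "inj_on h M"
    proof (rule inj_onI)
      fix e f assume ef: "e \<in> M" "f \<in> M" "h e = h f"
      have "h e \<in> e" using hk1[OF ef(1)] by simp
      moreover have "h e \<in> f" using hk1[OF ef(2)] ef(3) by simp
      ultimately have "e \<inter> f \<noteq> {}" by auto
      then show "e = f" using ef(1,2) disj by auto
    qed
  next
    show "h ` M = U \<inter> \<Union>M"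
    proof
      show "h ` M \<subseteq> U \<inter> \<Union>M" using hk1 by auto
    next
      show "U \<inter> \<Union>M \<subseteq> h ` M"
      proof
        fix x assume "x \<in> U \<inter> \<Union>M"
        then obtain e where "e \<in> M" "x \<in> U" "x \<in> e" by auto
        then have "x = h e" using hk2 by simp
        then show "x \<in> h ` M" using \<open>e \<in> M\<close> by simp
      qed
    qed
  qed
  then show ?thesis by (rule bij_betw_same_card)
qed

lemma cross:
  assumes "(s,t) \<in> {(a,b). {a,b} \<in> E}\<^sup>*" "s \<in> X" "t \<notin> X"
  shows "\<exists>a b. {a,b} \<in> E \<and> a \<in> X \<and> b \<notin> X"
  using assms
proof (induction rule: rtrancl_induct)
  case base then show ?case by simp
next
  case (step y z)
  show ?case
  proof (cases "y \<in> X")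
    case True then show ?thesis using step by blast
  next
    case False then show ?thesis using step by blast
  qed
qed

lemma nbhd_fin: "bip U W F \<Longrightarrow> finite F \<Longrightarrow> finite (nbhd F x)"
proof -
  assume a: "bip U W F" "finite F"
  have "nbhd F x \<subseteq> \<Union>F" unfolding nbhd_def by blast
  moreover have "\<forall>e\<in>F. finite e" using a(1) unfolding bip_def by auto
  ultimately show ?thesis using a(2) by (meson finite_Union finite_subset)
qed

lemma nbhd_set_fin: "bip U W F \<Longrightarrow> finite F \<Longrightarrow> finite (nbhd_set F T)"
proof -
  assume a: "bip U W F" "finite F"
  have "nbhd_set F T \<subseteq> \<Union>F" unfolding nbhd_set_def nbhd_def by blast
  moreover have "\<forall>e\<in>F. finite e" using a(1) unfolding bip_def by auto
  ultimately show ?thesis using a(2) by (meson finite_Union finite_subset)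
qed

lemma nbhd_side: "bip U W F \<Longrightarrow> u \<in> U \<Longrightarrow> x \<in> nbhd F u \<Longrightarrow> x \<in> W"
proof -
  assume a: "bip U W F" "u \<in> U" "x \<in> nbhd F u"
  then have "{u,x} \<in> F" unfolding nbhd_def by simp
  then obtain p q where "p \<in> U" "q \<in> W" "{u,x} = {p,q}" using a(1) unfolding bip_def by blast
  moreover have "U \<inter> W = {}" using a(1) unfolding bip_def by blast
  moreover have "(u = p \<and> x = q) \<or> (u = q \<and> x = p)" using calculation(3) by (simp add: doubleton_eq_iff)
  ultimately show "x \<in> W" using a(2) by blast
qed

lemma nbhd_side2: "bip U W F \<Longrightarrow> u \<in> W \<Longrightarrow> x \<in> nbhd F u \<Longrightarrow> x \<in> U"
proof -
  assume a: "bip U W F" "u \<in> W" "x \<in> nbhd F u"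
  then have "{u,x} \<in> F" unfolding nbhd_def by simp
  then obtain p q where "p \<in> U" "q \<in> W" "{u,x} = {p,q}" using a(1) unfolding bip_def by blast
  moreover have "U \<inter> W = {}" using a(1) unfolding bip_def by blast
  moreover have "(u = p \<and> x = q) \<or> (u = q \<and> x = p)" using calculation(3) by (simp add: doubleton_eq_iff)
  ultimately show "x \<in> U" using a(2) by blast
qed

lemma nbhd_sym: "x \<in> nbhd F u \<Longrightarrow> u \<in> nbhd F x"
  unfolding nbhd_def by (simp add: insert_commute)



lemma bip_UW: "bip U W F \<Longrightarrow> U \<inter> W = {}" unfolding bip_def by simp

lemma matching_sub: "matching F M \<Longrightarrow> M \<subseteq> F" unfolding matching_def by simp

lemma matching_disj: "matching F M \<Longrightarrow> e \<in> M \<Longrightarrow> f \<in> M \<Longrightarrow> e \<noteq> f \<Longrightarrow> e \<inter> f = {}"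
  unfolding matching_def by simp

lemma maximal_matching_m: "maximal_matching F M \<Longrightarrow> matching F M"
  unfolding maximal_matching_def by simp

lemma edge_W: "bip U W F \<Longrightarrow> m \<in> F \<Longrightarrow> t \<in> W \<Longrightarrow> t \<in> m \<Longrightarrow> \<exists>p\<in>U. m = {t,p}"
proof -
  assume a: "bip U W F" "m \<in> F" "t \<in> W" "t \<in> m"
  obtain p q where pq: "p \<in> U" "q \<in> W" "m = {p,q}" using bip_edge[OF a(1,2)] by blast
  have "t \<noteq> p" using pq(1) a(3) bip_UW[OF a(1)] by blast
  then have "t = q" using a(4) pq(3) by blast
  then show ?thesis using pq by blast
qed

lemma edge_U: "bip U W F \<Longrightarrow> m \<in> F \<Longrightarrow> t \<in> U \<Longrightarrow> t \<in> m \<Longrightarrow> \<exists>p\<in>W. m = {t,p}"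
proof -
  assume a: "bip U W F" "m \<in> F" "t \<in> U" "t \<in> m"
  obtain p q where pq: "p \<in> U" "q \<in> W" "m = {p,q}" using bip_edge[OF a(1,2)] by blast
  have "t \<noteq> q" using pq(2) a(3) bip_UW[OF a(1)] by blast
  then have "t = p" using a(4) pq(3) by blast
  then show ?thesis using pq by blast
qed

lemma easy_hall:
  assumes "bip U W F" "maximal_matching F M" "u \<in> U" "u \<notin> \<Union>M" "T \<subseteq> nbhd F u"
    "finite (nbhd_set F T)"
  shows "card T \<le> card (nbhd_set F T - {u})"
proof -
  have UW: "U \<inter> W = {}" using bip_UW[OF assms(1)] .
  have mm: "matching F M" using maximal_matching_m[OF assms(2)] .
  have MF: "M \<subseteq> F" using matching_sub[OF mm] .
  have part: "\<forall>t\<in>T. \<exists>p. {t,p} \<in> M \<and> p \<in> U"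
  proof
    fix t assume t: "t \<in> T"
    have tW: "t \<in> W" using nbhd_side[OF assms(1,3)] t assms(5) by blast
    have e: "{u,t} \<in> F" using t assms(5) unfolding nbhd_def by blast
    have "{u,t} \<notin> M" using assms(4) by blast
    then obtain m where m: "m \<in> M" "m \<noteq> {u,t}" "m \<inter> {u,t} \<noteq> {}"
      using maximal_cover[OF assms(2) e] by blast
    have "u \<notin> m" using assms(4) m(1) by blast
    then have "t \<in> m" using m(3) by blast
    then obtain p where "p \<in> U" "m = {t,p}" using edge_W[OF assms(1) _ tW] m(1) MF by blast
    then show "\<exists>p. {t,p} \<in> M \<and> p \<in> U" using m(1) by blast
  qed
  define g where "g = (\<lambda>t. SOME p. {t,p} \<in> M \<and> p \<in> U)"
  have g: "\<forall>t\<in>T. {t, g t} \<in> M \<and> g t \<in> U"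
  proof
    fix t assume "t \<in> T"
    then have "\<exists>p. {t,p} \<in> M \<and> p \<in> U" using part by blast
    then show "{t, g t} \<in> M \<and> g t \<in> U" unfolding g_def by (rule someI_ex)
  qed
  have TW: "T \<subseteq> W" using nbhd_side[OF assms(1,3)] assms(5) by blast
  have inj: "inj_on g T"
  proof (rule inj_onI)
    fix t t' assume tt: "t \<in> T" "t' \<in> T" "g t = g t'"
    have "{t, g t} = {t', g t'}"
    proof (rule ccontr)
      assume "{t, g t} \<noteq> {t', g t'}"
      then have "{t, g t} \<inter> {t', g t'} = {}" using matching_disj[OF mm] g tt by blast
      then show False using tt(3) by blast
    qed
    then have "t' \<in> {t, g t}" by blast
    moreover have "t' \<noteq> g t" using g tt TW UW by blast
    ultimately show "t = t'" by blast
  qed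
  have img: "g ` T \<subseteq> nbhd_set F T - {u}"
  proof
    fix x assume "x \<in> g ` T"
    then obtain t where t: "t \<in> T" "x = g t" by blast
    have "{t, x} \<in> F" using g t MF by blast
    then have "x \<in> nbhd_set F T" using t(1) unfolding nbhd_set_def nbhd_def by blast
    moreover have "x \<noteq> u" using g t assms(4) by blast
    ultimately show "x \<in> nbhd_set F T - {u}" by blast
  qed
  show ?thesis using card_inj_on_le[OF inj img] assms(6) by simp
qed

lemma nbhd_set_Un: "nbhd_set F (A \<union> B) = nbhd_set F A \<union> nbhd_set F B"
  unfolding nbhd_set_def by simp

lemma nbhd_set_mono: "A \<subseteq> B \<Longrightarrow> nbhd_set F A \<subseteq> nbhd_set F B"
  unfolding nbhd_set_def by (rule UN_mono) auto

lemma nbhd_set_center: "T \<subseteq> nbhd F u \<Longrightarrow> T \<noteq> {} \<Longrightarrow> u \<in> nbhd_set F T"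
proof -
  assume a: "T \<subseteq> nbhd F u" "T \<noteq> {}"
  then obtain t where t: "t \<in> T" by blast
  have "u \<in> nbhd F t" using nbhd_sym[OF subsetD[OF a(1) t]] .
  then show ?thesis using t unfolding nbhd_set_def by blast
qed

lemma notstrong:
  assumes "bip U W F" "finite F" "u \<in> U"
    "\<forall>T \<subseteq> nbhd F u. T \<noteq> {} \<longrightarrow> card T < card (nbhd_set F T)"
  shows "\<not> strong_vertex F u"
proof -
  have UW: "U \<inter> W = {}" using bip_UW[OF assms(1)] .
  define X where "X = nbhd F u"
  define A where "A = (\<lambda>x. nbhd F x - {u})"
  have XW: "X \<subseteq> W" unfolding X_def using nbhd_side[OF assms(1,3)] by blast
  have finX: "finite X" using nbhd_fin[OF assms(1,2)] X_def by simp
  have finA: "\<forall>x\<in>X. finite (A x)" using nbhd_fin[OF assms(1,2)] A_def by simp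
  have hc: "\<forall>T\<subseteq>X. card T \<le> card (\<Union>(A ` T))"
  proof (intro allI impI)
    fix T assume T: "T \<subseteq> X"
    show "card T \<le> card (\<Union>(A ` T))"
    proof (cases "T = {}")
      case True then show ?thesis by simp
    next
      case False
      have e: "\<Union>(A ` T) = nbhd_set F T - {u}" unfolding A_def nbhd_set_def by blast
      have uin: "u \<in> nbhd_set F T" using nbhd_set_center[of T F u] T False X_def by simp
      have fin: "finite (nbhd_set F T)" using nbhd_set_fin[OF assms(1,2)] .
      have "card (nbhd_set F T - {u}) = card (nbhd_set F T) - 1" using uin fin by simp
      moreover have "card T < card (nbhd_set F T)"
      proof -
        have "T \<subseteq> nbhd F u" using T X_def by simp
        then show ?thesis using assms(4) False by blast
      qed
      ultimately show ?thesis using e by simp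
    qed
  qed
  obtain g where g: "inj_on g X" "\<forall>x\<in>X. g x \<in> A x" using hall[OF finX finA hc] by blast
  define F' where "F' = delete_vertex F u"
  define M0 where "M0 = (\<lambda>x. {x, g x}) ` X"
  have gU: "\<forall>x\<in>X. g x \<in> U"
  proof
    fix x assume x: "x \<in> X"
    then have gx: "g x \<in> nbhd F x" using g(2) by (simp add: A_def)
    show "g x \<in> U" by (rule nbhd_side2[OF assms(1) subsetD[OF XW x] gx])
  qed
  have m0: "matching F' M0" unfolding M0_def
  proof (rule mk_matching)
    show "\<forall>x\<in>X. {x, g x} \<in> F'"
    proof
      fix x assume x: "x \<in> X"
      have "{x, g x} \<in> F" using g(2) x by (simp add: A_def nbhd_def)
      moreover have "x \<noteq> u" using x XW assms(3) UW by blast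
      moreover have "g x \<noteq> u" using g(2) x by (simp add: A_def)
      ultimately show "{x, g x} \<in> F'" unfolding F'_def delete_vertex_def by blast
    qed
    show "\<forall>x\<in>X. g x \<notin> X" using gU XW UW by blast
    show "inj_on g X" using g(1) .
  qed
  have finF': "finite F'" using assms(2) unfolding F'_def delete_vertex_def by simp
  obtain M where M: "maximal_matching F' M" "M0 \<subseteq> M" using extend_maximal[OF finF' m0] by blast
  have MF': "M \<subseteq> F'" using matching_sub[OF maximal_matching_m[OF M(1)]] .
  have F'F: "F' \<subseteq> F" unfolding F'_def delete_vertex_def by blast
  have mF: "matching F M" using matching_mono[OF maximal_matching_m[OF M(1)]] MF' F'F by blast
  have mx: "maximal_matching F M"
  proof (rule maximal_if_cover[OF mF], rule ballI)
    fix e assume e: "e \<in> F - M"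
    show "\<exists>m\<in>M. m \<inter> e \<noteq> {}"
    proof (cases "u \<in> e")
      case False
      then have "e \<in> F'" using e unfolding F'_def delete_vertex_def by blast
      then show ?thesis using maximal_cover[OF M(1)] e by blast
    next
      case True
      obtain b where b: "b \<in> W" "e = {u,b}" using edge_U[OF assms(1) _ assms(3) True] e by blast
      have "b \<in> X" using e b unfolding X_def nbhd_def by blast
      then have "{b, g b} \<in> M0" unfolding M0_def by blast
      then have inM: "{b, g b} \<in> M" using M(2) by blast
      have ne: "{b, g b} \<inter> e \<noteq> {}" using b(2) by simp
      show ?thesis using bexI[of "\<lambda>m. m \<inter> e \<noteq> {}", OF ne inM] .
    qed
  qed
  have "u \<notin> \<Union>M" using MF' by (auto simp: F'_def delete_vertex_def)
  then show ?thesis using mx unfolding strong_vertex_def by blast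
qed

lemma bip_dv: "bip U W F \<Longrightarrow> bip U W (delete_vertex F w)"
  unfolding bip_def delete_vertex_def by blast

lemma nbhd_dv_center: "u \<noteq> w \<Longrightarrow> nbhd (delete_vertex F w) u = nbhd F u - {w}"
  unfolding nbhd_def delete_vertex_def by auto

lemma nbhd_dv_W: "bip U W F \<Longrightarrow> t \<in> W \<Longrightarrow> w \<in> W \<Longrightarrow> t \<noteq> w \<Longrightarrow> nbhd (delete_vertex F w) t = nbhd F t"
proof -
  assume a: "bip U W F" "t \<in> W" "w \<in> W" "t \<noteq> w"
  have "\<And>x. x \<in> nbhd F t \<Longrightarrow> x \<noteq> w" using nbhd_side2[OF a(1,2)] a(3) bip_UW[OF a(1)] by blast
  then show ?thesis using a(4) unfolding nbhd_def delete_vertex_def by auto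
qed



lemma nbhd_fin_sub: "bip U W F \<Longrightarrow> finite F \<Longrightarrow> S \<subseteq> nbhd F u \<Longrightarrow> finite S"
  by (rule finite_subset, assumption, rule nbhd_fin)

lemma nbhd_dv_sub: "nbhd (delete_vertex F w) x \<subseteq> nbhd F x"
  unfolding nbhd_def delete_vertex_def by blast

lemma nbhd_set_dv_sub: "nbhd_set (delete_vertex F w) T \<subseteq> nbhd_set F T"
  unfolding nbhd_set_def by (rule UN_mono[OF order_refl nbhd_dv_sub])

lemma iii_ii:
  assumes bp: "bip U W E" and fE: "finite E" and u: "u \<in> U"
    and S: "S \<noteq> {}" "S \<subseteq> nbhd E u" "card (nbhd_set E S) \<le> card S - 1"
  shows "square_strong E u"
proof -
  have UW: "U \<inter> W = {}" using bip_UW[OF bp] .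
  define N where "N = nbhd_set E S"
  have finN: "finite N" unfolding N_def using nbhd_set_fin[OF bp fE] .
  have uN: "u \<in> N" unfolding N_def using nbhd_set_center[OF S(2,1)] .
  have cN: "card (N - {u}) = card N - 1" using finN uN by simp
  have cN1: "card N \<ge> 1" using finN uN by (metis One_nat_def Suc_leI card_gt_0_iff empty_iff)
  have cS: "card S \<ge> 2" using cN1 S(3) unfolding N_def by linarith
  have finS: "finite S" using nbhd_fin_sub[OF bp fE S(2)] .
  have st: "strong_vertex E u"
    unfolding strong_vertex_def
  proof (intro allI impI)
    fix M assume M: "maximal_matching E M"
    show "u \<in> \<Union>M"
    proof (rule ccontr)
      assume "u \<notin> \<Union>M"
      then have "card S \<le> card (N - {u})"
        unfolding N_def by (rule easy_hall[OF bp M u _ S(2) nbhd_set_fin[OF bp fE]])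
      then show False using cN cS S(3) unfolding N_def by linarith
    qed
  qed
  have "\<forall>w\<in>nbhd E u. strong_vertex (delete_vertex E w) u"
  proof
    fix w assume w: "w \<in> nbhd E u"
    have wW: "w \<in> W" using nbhd_side[OF bp u w] .
    have uw: "u \<noteq> w" using wW u UW by blast
    define T where "T = S - {w}"
    have T: "T \<subseteq> nbhd (delete_vertex E w) u" using S(2) uw unfolding T_def nbhd_dv_center[OF uw] by blast
    have cT: "card T \<ge> card S - 1" unfolding T_def by (simp add: card_Diff_singleton_if)
    have bp': "bip U W (delete_vertex E w)" using bip_dv[OF bp] .
    have fE': "finite (delete_vertex E w)" using fE unfolding delete_vertex_def by simp
    have sub: "nbhd_set (delete_vertex E w) T - {u} \<subseteq> N - {u}"
    proof -
      have "T \<subseteq> S" unfolding T_def by blast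
      then show ?thesis using nbhd_set_dv_sub[of E w T] nbhd_set_mono[of T S E] unfolding N_def by blast
    qed
    show "strong_vertex (delete_vertex E w) u"
      unfolding strong_vertex_def
    proof (intro allI impI)
      fix M assume M: "maximal_matching (delete_vertex E w) M"
      show "u \<in> \<Union>M"
      proof (rule ccontr)
        assume "u \<notin> \<Union>M"
        then have "card T \<le> card (nbhd_set (delete_vertex E w) T - {u})"
          by (rule easy_hall[OF bp' M u _ T nbhd_set_fin[OF bp' fE']])
        also have "\<dots> \<le> card (N - {u})" using card_mono[OF _ sub] finN by simp
        finally show False using cN cS cT S(3) unfolding N_def by linarith
      qed
    qed
  qed
  then show ?thesis using st unfolding square_strong_def by blast
qed

lemma ii_iii:
  assumes bp: "bip U W E" and fE: "finite E" and u: "u \<in> U"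
    and sq: "square_strong E u"
  shows "\<exists>S. S \<noteq> {} \<and> S \<subseteq> nbhd E u \<and> card (nbhd_set E S) \<le> card S - 1"
proof -
  have UW: "U \<inter> W = {}" using bip_UW[OF bp] .
  define X where "X = nbhd E u"
  define P where "P = (\<lambda>S. S \<noteq> {} \<and> S \<subseteq> X \<and> card (nbhd_set E S) \<le> card S)"
  have st: "strong_vertex E u" using sq unfolding square_strong_def by blast
  have "\<exists>T. T \<subseteq> nbhd E u \<and> T \<noteq> {} \<and> \<not> card T < card (nbhd_set E T)"
    using notstrong[OF bp fE u] st by blast
  then obtain S0 where "P S0" unfolding P_def X_def by (meson not_less)
  have step2: "\<forall>w\<in>X. \<exists>T. T \<subseteq> X - {w} \<and> P T"
  proof
    fix w assume w: "w \<in> X"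
    have wW: "w \<in> W" using nbhd_side[OF bp u] w unfolding X_def by blast
    have uw: "u \<noteq> w" using wW u UW by blast
    have bp': "bip U W (delete_vertex E w)" using bip_dv[OF bp] .
    have fE': "finite (delete_vertex E w)" using fE unfolding delete_vertex_def by simp
    have "strong_vertex (delete_vertex E w) u" using sq w unfolding square_strong_def X_def by simp
    then have "\<exists>T. T \<subseteq> nbhd (delete_vertex E w) u \<and> T \<noteq> {} \<and> \<not> card T < card (nbhd_set (delete_vertex E w) T)"
      using notstrong[OF bp' fE' u] by blast
    then obtain T where T: "T \<subseteq> X - {w}" "T \<noteq> {}" "card (nbhd_set (delete_vertex E w) T) \<le> card T"
      unfolding nbhd_dv_center[OF uw] X_def by (meson not_less)
    have TW: "T \<subseteq> W" using T(1) nbhd_side[OF bp u] unfolding X_def by blast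
    have "nbhd_set (delete_vertex E w) T = nbhd_set E T"
      unfolding nbhd_set_def
    proof (rule SUP_cong)
      fix t assume t: "t \<in> T"
      have "t \<noteq> w" using t T(1) by blast
      then show "nbhd (delete_vertex E w) t = nbhd E t" using nbhd_dv_W[OF bp _ wW] TW t by blast
    qed simp
    then have "P T" using T unfolding P_def by auto
    then show "\<exists>T. T \<subseteq> X - {w} \<and> P T" using T(1) by blast
  qed
  obtain A where A: "P A" "\<forall>B. P B \<longrightarrow> card A \<le> card B"
    using ex_has_least_nat[of P S0 card] \<open>P S0\<close> by blast
  have finX: "finite X" unfolding X_def using nbhd_fin[OF bp fE] .
  have PA: "A \<noteq> {}" "A \<subseteq> X" "card (nbhd_set E A) \<le> card A" using A(1) unfolding P_def by auto
  obtain w where w: "w \<in> A" using PA(1) by blast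
  obtain B where B: "B \<subseteq> X - {w}" "P B" using step2 w PA(2) by blast
  have PB: "B \<noteq> {}" "B \<subseteq> X" "card (nbhd_set E B) \<le> card B" using B(2) unfolding P_def by auto
  have finA: "finite A" using finite_subset[OF PA(2) finX] .
  have finB: "finite B" using finite_subset[OF PB(2) finX] .
  define NA where "NA = nbhd_set E A"
  define NB where "NB = nbhd_set E B"
  have finNA: "finite NA" unfolding NA_def using nbhd_set_fin[OF bp fE] .
  have finNB: "finite NB" unfolding NB_def using nbhd_set_fin[OF bp fE] .
  have uA: "u \<in> NA" unfolding NA_def by (rule nbhd_set_center[of A E u]) (use PA in \<open>auto simp: X_def\<close>)
  have uB: "u \<in> NB" unfolding NB_def by (rule nbhd_set_center[of B E u]) (use PB in \<open>auto simp: X_def\<close>)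
  have c1: "card (A \<union> B) + card (A \<inter> B) = card A + card B" using card_Un_Int[OF finA finB] by simp
  have c2: "card (NA \<union> NB) + card (NA \<inter> NB) = card NA + card NB" using card_Un_Int[OF finNA finNB] by simp
  have NU: "nbhd_set E (A \<union> B) = NA \<union> NB" unfolding NA_def NB_def by (rule nbhd_set_Un)
  have NI: "nbhd_set E (A \<inter> B) \<subseteq> NA \<inter> NB" unfolding NA_def NB_def
    using nbhd_set_mono[of "A \<inter> B" A E] nbhd_set_mono[of "A \<inter> B" B E] by blast
  have cI: "card (NA \<inter> NB) \<ge> 1"
  proof -
    have "u \<in> NA \<inter> NB" using uA uB by blast
    moreover have "finite (NA \<inter> NB)" using finNA by simp
    ultimately have "card (NA \<inter> NB) \<noteq> 0" by auto
    then show ?thesis by simp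
  qed
  have ABX: "A \<union> B \<noteq> {} \<and> A \<union> B \<subseteq> X" using PA PB by blast
  show ?thesis
  proof (cases "card (nbhd_set E (A \<union> B)) + 1 \<le> card (A \<union> B)")
    case True
    then show ?thesis using ABX unfolding X_def by (intro exI[of _ "A \<union> B"]) auto
  next
    case False
    then have F: "card (NA \<union> NB) \<ge> card (A \<union> B)" using NU by simp
    show ?thesis
    proof (cases "A \<inter> B = {}")
      case True
      then have "card (A \<inter> B) = 0" by simp
      then show ?thesis using F c1 c2 cI PA(3) PB(3) unfolding NA_def NB_def by linarith
    next
      case False
      have "card (nbhd_set E (A \<inter> B)) \<le> card (NA \<inter> NB)"
        using card_mono[OF _ NI] finNA by simp
      then have "card (nbhd_set E (A \<inter> B)) \<le> card (A \<inter> B)"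
        using F c1 c2 PA(3) PB(3) unfolding NA_def NB_def by linarith
      then have "P (A \<inter> B)" using False PA(2) unfolding P_def by blast
      then have "card A \<le> card (A \<inter> B)" using A(2) by blast
      moreover have "A \<inter> B \<subset> A" using w B(1) by blast
      ultimately show ?thesis using psubset_card_mono[OF finA] by (meson not_le)
    qed
  qed
qed



lemma graph_basics:
  assumes "simple_graph V E" "bipartition V E U W"
  shows "bip U W E \<and> finite E \<and> finite U \<and> finite W"
proof -
  have fV: "finite V" using assms(1) unfolding simple_graph_def by blast
  have "E \<subseteq> Pow V" using assms(1) unfolding simple_graph_def by blast
  then have fE: "finite E" using fV by (meson finite_Pow_iff finite_subset)
  have UV: "U \<union> W = V" using assms(2) unfolding bipartition_def by blast
  have "finite U" "finite W" using fV UV by auto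
  moreover have "bip U W E" using assms(2) unfolding bipartition_def bip_def by blast
  ultimately show ?thesis using fE by blast
qed

lemma card_max_strong:
  assumes "bip U W E" "maximal_matching E M" "\<forall>u\<in>U. strong_vertex E u"
  shows "card M = card U"
proof -
  have "card M = card (U \<inter> \<Union>M)" using card_matching[OF assms(1) maximal_matching_m[OF assms(2)]] .
  moreover have "U \<subseteq> \<Union>M" using assms(2,3) unfolding strong_vertex_def by blast
  ultimately show ?thesis by (simp add: Int_absorb2)
qed

lemma swap:
  assumes "matching F M" "finite M" "ey \<in> M" "ez \<in> M" "y \<in> ey" "z \<in> ez" "ey \<noteq> ez" "{y,z} \<in> F"
  shows "matching F (insert {y,z} (M - {ey,ez})) \<and> card (insert {y,z} (M - {ey,ez})) = card M - 1"
proof -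
  have disj: "\<And>e f. e \<in> M \<Longrightarrow> f \<in> M \<Longrightarrow> e \<noteq> f \<Longrightarrow> e \<inter> f = {}" using matching_disj[OF assms(1)] by blast
  have yz: "\<And>m. m \<in> M - {ey,ez} \<Longrightarrow> m \<inter> {y,z} = {}"
  proof -
    fix m assume m: "m \<in> M - {ey,ez}"
    have "y \<notin> m" using disj[OF _ assms(3)] m assms(5) by blast
    moreover have "z \<notin> m" using disj[OF _ assms(4)] m assms(6) by blast
    ultimately show "m \<inter> {y,z} = {}" by blast
  qed
  have m1: "matching F (insert {y,z} (M - {ey,ez}))"
    unfolding matching_def
  proof (intro conjI ballI impI)
    show "insert {y, z} (M - {ey, ez}) \<subseteq> F" using assms(8) matching_sub[OF assms(1)] by blast
  next
    fix e f assume ef: "e \<in> insert {y, z} (M - {ey, ez})" "f \<in> insert {y, z} (M - {ey, ez})" "e \<noteq> f"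
    show "e \<inter> f = {}"
    proof (cases "e = {y,z}")
      case True
      then have "f \<in> M - {ey,ez}" using ef by blast
      then show ?thesis using yz True by blast
    next
      case False
      then have e: "e \<in> M - {ey,ez}" using ef by blast
      show ?thesis
      proof (cases "f = {y,z}")
        case True then show ?thesis using yz[OF e] by blast
      next
        case False
        then have "f \<in> M - {ey,ez}" using ef by blast
        then show ?thesis using disj e ef(3) by blast
      qed
    qed
  qed
  have nin: "{y,z} \<notin> M - {ey,ez}" using yz by blast
  have "card (M - {ey,ez}) = card M - 2"
  proof -
    have "{ey,ez} \<subseteq> M" using assms(3,4) by blast
    then have "card (M - {ey,ez}) = card M - card {ey,ez}" using assms(2) by (meson card_Diff_subset finite_subset)
    then show ?thesis using assms(7) by simp
  qed
  moreover have "card M \<ge> 2"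
  proof -
    have "{ey,ez} \<subseteq> M" using assms(3,4) by blast
    then have "card {ey,ez} \<le> card M" using assms(2) by (rule card_mono[rotated])
    then show ?thesis using assms(7) by simp
  qed
  moreover have "card (insert {y,z} (M - {ey,ez})) = card (M - {ey,ez}) + 1"
    using nin assms(2) by simp
  ultimately show ?thesis using m1 by simp
qed


lemma lpp:
  assumes bp: "bip U W E" and fE: "finite E" and fU: "finite U" and fW: "finite W"
    and conn: "connected_graph V E" and V: "U \<union> W = V" and c: "card U < card W"
    and eq: "equimatchable E"
  shows "\<forall>u\<in>U. strong_vertex E u"
proof -
  have UW: "U \<inter> W = {}" using bip_UW[OF bp] .
  define dfc where "dfc = (\<lambda>S. int (card S) - int (card (nbhd_set E S)))"
  have finI: "finite (dfc ` Pow U)" using fU by simp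
  define \<delta> where "\<delta> = Max (dfc ` Pow U)"
  have dge: "\<And>S'. S' \<subseteq> U \<Longrightarrow> dfc S' \<le> \<delta>" unfolding \<delta>_def using finI by (simp add: Max_ge)
  have "\<delta> \<in> dfc ` Pow U" unfolding \<delta>_def using finI by (intro Max_in) auto
  then obtain S where S: "S \<subseteq> U" "dfc S = \<delta>" by blast
  have eqc: "\<And>M M'. maximal_matching E M \<Longrightarrow> maximal_matching E M' \<Longrightarrow> card M = card M'"
    using eq unfolding equimatchable_def by blast
  show ?thesis
  proof (cases "\<delta> \<le> 0")
    case True
    have hc: "\<forall>T\<subseteq>U. card T \<le> card (\<Union>(nbhd E ` T))"
    proof (intro allI impI)
      fix T assume T: "T \<subseteq> U"
      have "dfc T \<le> 0" using dge[OF T] True by simp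
      then have "card T \<le> card (nbhd_set E T)" unfolding dfc_def by simp
      then show "card T \<le> card (\<Union>(nbhd E ` T))" unfolding nbhd_set_def .
    qed
    have fA: "\<forall>x\<in>U. finite (nbhd E x)" using nbhd_fin[OF bp fE] by blast
    obtain f where f: "inj_on f U" "\<forall>x\<in>U. f x \<in> nbhd E x" using hall[OF fU fA hc] by blast
    have fW: "\<forall>x\<in>U. f x \<in> W" using f(2) nbhd_side[OF bp] by blast
    define M1 where "M1 = (\<lambda>x. {x, f x}) ` U"
    have fnU: "\<forall>x\<in>U. f x \<notin> U" using fW UW by blast
    have m1: "matching E M1" unfolding M1_def
    proof (rule mk_matching)
      show "\<forall>x\<in>U. {x, f x} \<in> E" using f(2) unfolding nbhd_def by blast
    qed (use fnU f(1) in auto)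
    have mx1: "maximal_matching E M1"
    proof (rule maximal_if_cover[OF m1], rule ballI)
      fix e assume e: "e \<in> E - M1"
      obtain a b where ab: "a \<in> U" "b \<in> W" "e = {a,b}" using bip_edge[OF bp] e by blast
      have inM: "{a, f a} \<in> M1" unfolding M1_def using ab(1) by blast
      have ne: "{a, f a} \<inter> e \<noteq> {}" using ab(3) by simp
      show "\<exists>m\<in>M1. m \<inter> e \<noteq> {}" using bexI[of "\<lambda>m. m \<inter> e \<noteq> {}", OF ne inM] .
    qed
    have cM1: "card M1 = card U" unfolding M1_def using mk_card fnU by blast
    show ?thesis
    proof (intro ballI)
      fix u assume u: "u \<in> U"
      show "strong_vertex E u" unfolding strong_vertex_def
      proof (intro allI impI)
        fix M assume M: "maximal_matching E M"
        have cM: "card M = card U" using eqc[OF M mx1] cM1 by simp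
        have cM2: "card M = card (U \<inter> \<Union>M)" using card_matching[OF bp maximal_matching_m[OF M]] .
        show "u \<in> \<Union>M"
        proof (rule ccontr)
          assume nu: "u \<notin> \<Union>M"
          have "U \<inter> \<Union>M \<subseteq> U - {u}" using nu by blast
          then have "card (U \<inter> \<Union>M) \<le> card (U - {u})" using fU by (simp add: card_mono)
          also have "\<dots> < card U" by (rule card_Diff1_less[OF fU u])
          finally show False using cM cM2 by simp
        qed
      qed
    qed
  next
    case False
    then have dpos: "dfc S > 0" using S(2) by simp
    define NS where "NS = nbhd_set E S"
    have finNS: "finite NS" unfolding NS_def using nbhd_set_fin[OF bp fE] .
    have finS: "finite S" using finite_subset[OF S(1) fU] .
    have cNS: "card NS < card S" using dpos unfolding dfc_def NS_def by simp
    have cSU: "card S \<le> card U" using card_mono[OF fU S(1)] .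
    have NSW: "NS \<subseteq> W"
    proof
      fix x assume "x \<in> NS"
      then obtain s where s: "s \<in> S" "x \<in> nbhd E s" unfolding NS_def nbhd_set_def by blast
      show "x \<in> W" using nbhd_side[OF bp _ s(2)] s(1) S(1) by blast
    qed
    obtain w0 where w0: "w0 \<in> W" "w0 \<notin> NS"
    proof (rule ccontr)
      assume "\<not> thesis"
      then have "W \<subseteq> NS" using that by blast
      then have "card W \<le> card NS" using card_mono[OF finNS] by blast
      then show False using cNS cSU c by linarith
    qed
    have "S \<noteq> {}" using cNS by auto
    then obtain s where s: "s \<in> S" by blast
    have sV: "s \<in> V" using s S(1) V by blast
    have w0V: "w0 \<in> V" using w0 V by blast
    have rt: "(s, w0) \<in> {(a, b). {a, b} \<in> E}\<^sup>*" using conn sV w0V unfolding connected_graph_def by blast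
    have w0X: "w0 \<notin> S \<union> NS" using w0 S(1) UW by blast
    obtain y z where yz: "{y,z} \<in> E" "y \<in> S \<union> NS" "z \<notin> S \<union> NS"
      using cross[OF rt _ w0X] s by blast
    have yNS: "y \<in> NS"
    proof (rule ccontr)
      assume "y \<notin> NS"
      then have yS: "y \<in> S" using yz(2) by blast
      have "z \<in> nbhd E y" using yz(1) unfolding nbhd_def by simp
      then have "z \<in> NS" using yS unfolding NS_def nbhd_set_def by blast
      then show False using yz(3) by blast
    qed
    have yW: "y \<in> W" using yNS NSW by blast
    have zU: "z \<in> U" using nbhd_side2[OF bp yW] yz(1) unfolding nbhd_def by blast
    have zS: "z \<notin> S" using yz(3) by blast
    define Aa where "Aa = (\<lambda>x. nbhd E x \<inter> S)"
    have hca: "\<forall>T\<subseteq>NS. card T \<le> card (\<Union>(Aa ` T))"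
    proof (intro allI impI)
      fix T assume T: "T \<subseteq> NS"
      define NT where "NT = nbhd_set E T"
      have e1: "\<Union>(Aa ` T) = NT \<inter> S" unfolding Aa_def NT_def nbhd_set_def by blast
      define S' where "S' = S - NT"
      have S'U: "S' \<subseteq> U" using S(1) unfolding S'_def by blast
      have d1: "dfc S' \<le> dfc S" using dge[OF S'U] S(2) by simp
      have sub: "nbhd_set E S' \<subseteq> NS - T"
      proof
        fix x assume "x \<in> nbhd_set E S'"
        then obtain s' where s': "s' \<in> S'" "x \<in> nbhd E s'" unfolding nbhd_set_def by blast
        have "x \<in> NS" using s' unfolding S'_def NS_def nbhd_set_def by blast
        moreover have "x \<notin> T"
        proof
          assume "x \<in> T"
          moreover have "s' \<in> nbhd E x" using nbhd_sym[OF s'(2)] .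
          ultimately have "s' \<in> NT" unfolding NT_def nbhd_set_def by blast
          then show False using s'(1) unfolding S'_def by blast
        qed
        ultimately show "x \<in> NS - T" by blast
      qed
      have finT: "finite T" using finite_subset[OF T finNS] .
      have cs1: "card (nbhd_set E S') \<le> card NS - card T"
        using card_mono[OF _ sub] finNS card_Diff_subset[OF finT T] by simp
      have cs2: "card S' = card S - card (S \<inter> NT)" unfolding S'_def
        using card_Diff_subset_Int finS by (simp add: card_Diff_subset_Int)
      have cs3: "card (S \<inter> NT) \<le> card S" using card_mono[OF finS] by simp
      have cs4: "card T \<le> card NS" using card_mono[OF finNS T] .
      have "int (card S') - int (card (nbhd_set E S')) \<le> int (card S) - int (card NS)"
        using d1 unfolding dfc_def NS_def by simp
      then have "card T \<le> card (S \<inter> NT)" using cs1 cs2 cs3 cs4 by linarith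
      then show "card T \<le> card (\<Union>(Aa ` T))" using e1 by (simp add: Int_commute)
    qed
    have fAa: "\<forall>x\<in>NS. finite (Aa x)" unfolding Aa_def using nbhd_fin[OF bp fE] by blast
    obtain fa where fa: "inj_on fa NS" "\<forall>x\<in>NS. fa x \<in> Aa x" using hall[OF finNS fAa hca] by blast
    define Ab where "Ab = (\<lambda>x. nbhd E x - NS)"
    have hcb: "\<forall>R\<subseteq>U - S. card R \<le> card (\<Union>(Ab ` R))"
    proof (intro allI impI)
      fix R assume R: "R \<subseteq> U - S"
      define NR where "NR = nbhd_set E R"
      have e1: "\<Union>(Ab ` R) = NR - NS" unfolding Ab_def NR_def nbhd_set_def by blast
      have SRU: "S \<union> R \<subseteq> U" using R S(1) by blast
      have d1: "dfc (S \<union> R) \<le> dfc S" using dge[OF SRU] S(2) by simp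
      have finR: "finite R" using finite_subset[OF R] fU by blast
      have finNR: "finite NR" unfolding NR_def using nbhd_set_fin[OF bp fE] .
      have c1: "card (S \<union> R) = card S + card R" using card_Un_disjoint[OF finS finR] R by blast
      have n1: "nbhd_set E (S \<union> R) = NS \<union> (NR - NS)" unfolding NS_def NR_def nbhd_set_Un by blast
      have c2: "card (NS \<union> (NR - NS)) = card NS + card (NR - NS)"
        using card_Un_disjoint[OF finNS] finNR by blast
      have "int (card (S \<union> R)) - int (card (NS \<union> (NR - NS))) \<le> int (card S) - int (card NS)"
        using d1 n1 unfolding dfc_def NS_def by simp
      then have "card R \<le> card (NR - NS)" using c1 c2 by linarith
      then show "card R \<le> card (\<Union>(Ab ` R))" using e1 by simp
    qed
    have finUS: "finite (U - S)" using fU by simp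
    have fAb: "\<forall>x\<in>U - S. finite (Ab x)" unfolding Ab_def using nbhd_fin[OF bp fE] by blast
    obtain fb where fb: "inj_on fb (U - S)" "\<forall>x\<in>U - S. fb x \<in> Ab x" using hall[OF finUS fAb hcb] by blast
    define g where "g = (\<lambda>x. if x \<in> NS then fa x else fb x)"
    define XX where "XX = NS \<union> (U - S)"
    have NSU: "NS \<inter> U = {}" using NSW UW by blast
    have ga: "\<And>x. x \<in> NS \<Longrightarrow> g x \<in> S \<and> g x \<in> nbhd E x"
      using fa(2) unfolding g_def Aa_def by auto
    have gb: "\<And>x. x \<in> U - S \<Longrightarrow> g x \<in> W \<and> g x \<notin> NS \<and> g x \<in> nbhd E x"
    proof -
      fix x assume x: "x \<in> U - S"
      then have "x \<notin> NS" using NSU by blast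
      then have "g x = fb x" unfolding g_def by simp
      then have "g x \<in> nbhd E x" "g x \<notin> NS" using fb(2) x unfolding Ab_def by auto
      moreover have "g x \<in> W" using nbhd_side[OF bp _ \<open>g x \<in> nbhd E x\<close>] x by blast
      ultimately show "g x \<in> W \<and> g x \<notin> NS \<and> g x \<in> nbhd E x" by blast
    qed
    have gE: "\<forall>x\<in>XX. {x, g x} \<in> E" using ga gb unfolding XX_def nbhd_def by blast
    have gX: "\<forall>x\<in>XX. g x \<notin> XX"
    proof
      fix x assume x: "x \<in> XX"
      show "g x \<notin> XX"
      proof (cases "x \<in> NS")
        case True then show ?thesis using ga[OF True] S(1) NSU unfolding XX_def by blast
      next
        case False then have "x \<in> U - S" using x unfolding XX_def by blast
        then show ?thesis using gb UW unfolding XX_def by blast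
      qed
    qed
    have ginj: "inj_on g XX"
    proof (rule inj_onI)
      fix x x' assume xx: "x \<in> XX" "x' \<in> XX" "g x = g x'"
      show "x = x'"
      proof (cases "x \<in> NS"; cases "x' \<in> NS")
        assume "x \<in> NS" "x' \<in> NS" then show ?thesis using fa(1) xx(3) unfolding g_def by (simp add: inj_on_eq_iff)
      next
        assume a: "x \<in> NS" "x' \<notin> NS"
        then have "x' \<in> U - S" using xx(2) unfolding XX_def by blast
        then show ?thesis using ga[OF a(1)] gb xx(3) S(1) UW by force
      next
        assume a: "x \<notin> NS" "x' \<in> NS"
        then have "x \<in> U - S" using xx(1) unfolding XX_def by blast
        then show ?thesis using ga[OF a(2)] gb xx(3) S(1) UW by force
      next
        assume a: "x \<notin> NS" "x' \<notin> NS"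
        then have "x \<in> U - S" "x' \<in> U - S" using xx(1,2) unfolding XX_def by blast+
        then show ?thesis using fb(1) xx(3) a unfolding g_def by (simp add: inj_on_eq_iff)
      qed
    qed
    define M2 where "M2 = (\<lambda>x. {x, g x}) ` XX"
    have m2: "matching E M2" unfolding M2_def using mk_matching[OF gE gX ginj] .
    have finM2: "finite M2" using finite_subset[OF matching_sub[OF m2] fE] .
    have yX: "y \<in> XX" using yNS unfolding XX_def by blast
    have zX: "z \<in> XX" using zU zS unfolding XX_def by blast
    define ey where "ey = {y, g y}"
    define ez where "ez = {z, g z}"
    have eyM: "ey \<in> M2" unfolding ey_def M2_def using yX by blast
    have ezM: "ez \<in> M2" unfolding ez_def M2_def using zX by blast
    have "z \<noteq> y" using zU yW UW by blast
    moreover have "z \<noteq> g y" using gX yX zX by blast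
    ultimately have eyez: "ey \<noteq> ez" unfolding ey_def ez_def by blast
    define M' where "M' = insert {y,z} (M2 - {ey,ez})"
    have sw: "matching E M' \<and> card M' = card M2 - 1"
      unfolding M'_def by (rule swap[OF m2 finM2 eyM ezM _ _ eyez yz(1)]) (simp_all add: ey_def ez_def)
    have covX: "\<And>v. v \<in> XX \<Longrightarrow> \<exists>m\<in>M'. v \<in> m"
    proof -
      fix v assume v: "v \<in> XX"
      show "\<exists>m\<in>M'. v \<in> m"
      proof (cases "v = y \<or> v = z")
        case True
        have "{y,z} \<in> M'" unfolding M'_def by blast
        then show ?thesis using True by blast
      next
        case False
        have "{v, g v} \<in> M2" unfolding M2_def using v by blast
        moreover have "{v, g v} \<noteq> ey"
        proof
          assume "{v, g v} = ey"
          then have "v \<in> {y, g y}" unfolding ey_def by blast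
          then show False using False gX yX v by blast
        qed
        moreover have "{v, g v} \<noteq> ez"
        proof
          assume "{v, g v} = ez"
          then have "v \<in> {z, g z}" unfolding ez_def by blast
          then show False using False gX zX v by blast
        qed
        ultimately have "{v, g v} \<in> M'" unfolding M'_def by blast
        then show ?thesis by blast
      qed
    qed
    have mx': "maximal_matching E M'"
    proof (rule maximal_if_cover, use sw in blast, rule ballI)
      fix e assume e: "e \<in> E - M'"
      obtain p q where pq: "p \<in> U" "q \<in> W" "e = {p,q}" using bip_edge[OF bp] e by blast
      have "\<exists>v\<in>e. v \<in> XX"
      proof (cases "p \<in> S")
        case True
        have "q \<in> nbhd E p" using e pq(3) unfolding nbhd_def by simp
        then have "q \<in> NS" using True unfolding NS_def nbhd_set_def by blast
        then show ?thesis using pq(3) unfolding XX_def by blast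
      next
        case False
        then show ?thesis using pq unfolding XX_def by blast
      qed
      then obtain v where v: "v \<in> e" "v \<in> XX" by blast
      obtain m where m: "m \<in> M'" "v \<in> m" using covX[OF v(2)] by blast
      have ne: "m \<inter> e \<noteq> {}" using m(2) v(1) by blast
      show "\<exists>m\<in>M'. m \<inter> e \<noteq> {}" using bexI[of "\<lambda>m. m \<inter> e \<noteq> {}", OF ne m(1)] .
    qed
    obtain M3 where M3: "maximal_matching E M3" "M2 \<subseteq> M3" using extend_maximal[OF fE m2] by blast
    have finM3: "finite M3" using finite_subset[OF matching_sub[OF maximal_matching_m[OF M3(1)]] fE] .
    have "card M2 \<le> card M3" using card_mono[OF finM3 M3(2)] .
    moreover have "card M2 \<ge> 1" using eyM finM2 by (metis One_nat_def Suc_leI card_gt_0_iff empty_iff)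
    moreover have "card M3 = card M'" using eqc[OF M3(1) mx'] .
    ultimately show ?thesis using sw by linarith
  qed
qed

lemma ii_i:
  assumes bp: "bip U W E" and fE: "finite E" and all: "\<forall>u\<in>U. square_strong E u"
  shows "edge_stable_equimatchable E"
proof -
  have UW: "U \<inter> W = {}" using bip_UW[OF bp] .
  have st: "\<forall>u\<in>U. strong_vertex E u" using all unfolding square_strong_def by blast
  have cU: "\<And>M. maximal_matching E M \<Longrightarrow> card M = card U" using card_max_strong[OF bp _ st] by blast
  have eqE: "equimatchable E" unfolding equimatchable_def using cU by auto
  have "\<forall>e\<in>E. equimatchable (E - {e})"
  proof
    fix e assume e: "e \<in> E"
    obtain a b where ab: "a \<in> U" "b \<in> W" "e = {a,b}" using bip_edge[OF bp e] by blast
    have key: "\<And>M. maximal_matching (E - {e}) M \<Longrightarrow> maximal_matching E M"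
    proof -
      fix M assume M: "maximal_matching (E - {e}) M"
      have mM: "matching (E - {e}) M" using maximal_matching_m[OF M] .
      have ME: "M \<subseteq> E - {e}" using matching_sub[OF mM] .
      have "M \<subseteq> E" using ME by blast
      then have mE: "matching E M" by (rule matching_mono[OF mM order_refl])
      show "maximal_matching E M"
      proof (rule ccontr)
        assume "\<not> maximal_matching E M"
        then have "\<not> (\<forall>e\<in>E - M. \<not> matching E (insert e M))"
          using mE unfolding maximal_matching_def by simp
        then obtain f where f: "f \<in> E - M" "matching E (insert f M)" by blast
        show False
        proof (cases "f = e")
          case False
          then have f2: "f \<in> (E - {e}) - M" using f(1) by blast
          have "insert f M \<subseteq> E - {e}" using ME f2 by blast
          then have "matching (E - {e}) (insert f M)"
            by (rule matching_mono[OF f(2) order_refl])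
          moreover have "\<forall>e'\<in>(E - {e}) - M. \<not> matching (E - {e}) (insert e' M)"
            using M unfolding maximal_matching_def by simp
          ultimately show False using f2 by blast
        next
          case True
          have "e \<notin> M" using ME by blast
          then have dj: "\<forall>m\<in>M. m \<inter> e = {}"
            using matching_disj[OF f(2)] True by blast
          have MD: "M \<subseteq> delete_vertex E b" using dj ME ab(3) unfolding delete_vertex_def by blast
          have mD: "matching (delete_vertex E b) M" using matching_mono[OF mM order_refl MD] .
          have mxD: "maximal_matching (delete_vertex E b) M"
          proof (rule maximal_if_cover[OF mD], rule ballI)
            fix g assume g: "g \<in> delete_vertex E b - M"
            then have "g \<in> (E - {e}) - M" using ab(3) unfolding delete_vertex_def by blast
            then obtain m where m: "m \<in> M" "m \<inter> g \<noteq> {}" using maximal_cover[OF M] by blast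
            show "\<exists>m\<in>M. m \<inter> g \<noteq> {}" using bexI[of "\<lambda>m. m \<inter> g \<noteq> {}", OF m(2) m(1)] .
          qed
          have "b \<in> nbhd E a" using e ab(3) unfolding nbhd_def by simp
          then have "strong_vertex (delete_vertex E b) a" using all ab(1) unfolding square_strong_def by blast
          then have "a \<in> \<Union>M" using mxD unfolding strong_vertex_def by blast
          then show False using dj ab(3) by blast
        qed
      qed
    qed
    show "equimatchable (E - {e})" unfolding equimatchable_def using key cU by auto
  qed
  then show ?thesis using eqE unfolding edge_stable_equimatchable_def by blast
qed

lemma deg2:
  assumes bp: "bip U W E" and fE: "finite E" and fU: "finite U"
    and conn: "connected_graph V E" and V: "U \<union> W = V" and c: "card U < card W"
    and u: "u \<in> U" and w: "w \<in> nbhd E u" and st: "strong_vertex E u"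
  shows "\<exists>w2\<in>nbhd E u. w2 \<noteq> w"
proof (rule ccontr)
  assume "\<not> (\<exists>w2\<in>nbhd E u. w2 \<noteq> w)"
  then have Nu: "\<And>x. x \<in> nbhd E u \<Longrightarrow> x = w" by blast
  have UW: "U \<inter> W = {}" using bip_UW[OF bp] .
  have wW: "w \<in> W" using nbhd_side[OF bp u w] .
  have Nw: "\<And>x. x \<in> nbhd E w \<Longrightarrow> x = u"
  proof (rule ccontr)
    fix x assume x: "x \<in> nbhd E w" "x \<noteq> u"
    have xU: "x \<in> U" using nbhd_side2[OF bp wW x(1)] .
    have xw: "{x,w} \<in> E" using x(1) unfolding nbhd_def by (simp add: insert_commute)
    have "matching E {{x,w}}" unfolding matching_def using xw by blast
    then obtain M where M: "maximal_matching E M" "{x,w} \<in> M" using extend_maximal[OF fE] by blast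
    have "u \<in> \<Union>M" using st M(1) unfolding strong_vertex_def by blast
    then obtain m where m: "m \<in> M" "u \<in> m" by blast
    have mE: "m \<in> E" using m(1) matching_sub[OF maximal_matching_m[OF M(1)]] by blast
    obtain p where p: "p \<in> W" "m = {u,p}" using edge_U[OF bp mE u m(2)] by blast
    have "p \<in> nbhd E u" using mE p(2) unfolding nbhd_def by simp
    then have "p = w" using Nu by blast
    then have mw: "m = {u,w}" using p(2) by simp
    have "m \<noteq> {x,w}" using mw x(2) xU wW UW u by (auto simp: doubleton_eq_iff)
    then have "m \<inter> {x,w} = {}" using matching_disj[OF maximal_matching_m[OF M(1)] m(1) M(2)] by blast
    then show False using mw by blast
  qed
  have uV: "u \<in> V" using u V by blast
  have VX: "V \<subseteq> {u,w}"
  proof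
    fix v assume v: "v \<in> V"
    show "v \<in> {u,w}"
    proof (rule ccontr)
      assume nv: "v \<notin> {u,w}"
      have "(u, v) \<in> {(a, b). {a, b} \<in> E}\<^sup>*" using conn uV v unfolding connected_graph_def by blast
      then obtain a b where ab: "{a,b} \<in> E" "a \<in> {u,w}" "b \<notin> {u,w}" using cross[of u v E "{u,w}"] nv by blast
      have "b \<in> nbhd E a" using ab(1) unfolding nbhd_def by simp
      then show False using ab(2,3) Nu Nw by blast
    qed
  qed
  have "W \<subseteq> {w}" using VX V u UW by blast
  then have "card W \<le> 1" using card_mono[of "{w}" W] by simp
  moreover have "card U \<ge> 1" using fU u by (metis One_nat_def Suc_leI card_gt_0_iff empty_iff)
  ultimately show False using c by linarith
qed

lemma i_ii:
  assumes bp: "bip U W E" and fE: "finite E" and fU: "finite U" and fW: "finite W"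
    and conn: "connected_graph V E" and V: "U \<union> W = V" and c: "card U < card W"
    and es: "edge_stable_equimatchable E"
  shows "\<forall>u\<in>U. square_strong E u"
proof
  fix u assume u: "u \<in> U"
  have UW: "U \<inter> W = {}" using bip_UW[OF bp] .
  have eq: "equimatchable E" using es unfolding edge_stable_equimatchable_def by blast
  have st: "\<forall>u\<in>U. strong_vertex E u" using lpp[OF bp fE fU fW conn V c eq] .
  have cU: "\<And>M. maximal_matching E M \<Longrightarrow> card M = card U" using card_max_strong[OF bp _ st] by blast
  have cU1: "card U \<ge> 1" using fU u by (metis One_nat_def Suc_leI card_gt_0_iff empty_iff)
  have "\<forall>w\<in>nbhd E u. strong_vertex (delete_vertex E w) u"
  proof
    fix w assume w: "w \<in> nbhd E u"
    have wW: "w \<in> W" using nbhd_side[OF bp u w] .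
    define e where "e = {u,w}"
    have eE: "e \<in> E" using w unfolding e_def nbhd_def by simp
    have eqe: "equimatchable (E - {e})" using es eE unfolding edge_stable_equimatchable_def by blast
    show "strong_vertex (delete_vertex E w) u"
    proof (rule ccontr)
      assume "\<not> strong_vertex (delete_vertex E w) u"
      then obtain M where M: "maximal_matching (delete_vertex E w) M" "u \<notin> \<Union>M"
        unfolding strong_vertex_def by blast
      have mM: "matching (delete_vertex E w) M" using maximal_matching_m[OF M(1)] .
      have MD: "M \<subseteq> delete_vertex E w" using matching_sub[OF mM] .
      have DE: "delete_vertex E w \<subseteq> E" unfolding delete_vertex_def by blast
      have wM: "w \<notin> \<Union>M" using MD unfolding delete_vertex_def by blast
      have eM: "e \<notin> M" using wM unfolding e_def by blast
      have finM: "finite M" using finite_subset[OF MD finite_subset[OF DE fE]] .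
      define M1 where "M1 = insert e M"
      have m1: "matching E M1"
        unfolding matching_def
      proof (intro conjI ballI impI)
        show "M1 \<subseteq> E" unfolding M1_def using eE MD DE by blast
      next
        fix f g assume fg: "f \<in> M1" "g \<in> M1" "f \<noteq> g"
        have dje: "\<And>m. m \<in> M \<Longrightarrow> m \<inter> e = {}" using M(2) wM unfolding e_def by blast
        show "f \<inter> g = {}"
        proof (cases "f = e")
          case True
          then have "g \<in> M" using fg unfolding M1_def by blast
          then show ?thesis using dje True by blast
        next
          case False
          then have fM: "f \<in> M" using fg unfolding M1_def by blast
          show ?thesis
          proof (cases "g = e")
            case True then show ?thesis using dje[OF fM] by blast
          next
            case False
            then have "g \<in> M" using fg unfolding M1_def by blast
            then show ?thesis using matching_disj[OF mM fM] fg(3) by blast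
          qed
        qed
      qed
      have mx1: "maximal_matching E M1"
      proof (rule maximal_if_cover[OF m1], rule ballI)
        fix f assume f: "f \<in> E - M1"
        show "\<exists>m\<in>M1. m \<inter> f \<noteq> {}"
        proof (cases "w \<in> f")
          case True
          have ne: "e \<inter> f \<noteq> {}" using True unfolding e_def by blast
          have inM: "e \<in> M1" unfolding M1_def by blast
          show ?thesis using bexI[of "\<lambda>m. m \<inter> f \<noteq> {}", OF ne inM] .
        next
          case False
          then have "f \<in> delete_vertex E w - M" using f unfolding delete_vertex_def M1_def by blast
          then obtain m where m: "m \<in> M" "m \<inter> f \<noteq> {}" using maximal_cover[OF M(1)] by blast
          have inM: "m \<in> M1" using m(1) unfolding M1_def by blast
          show ?thesis using bexI[of "\<lambda>m. m \<inter> f \<noteq> {}", OF m(2) inM] .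
        qed
      qed
      have "card M1 = card M + 1" unfolding M1_def using eM finM by simp
      then have cM: "card M + 1 = card U" using cU[OF mx1] by simp
      have "M \<subseteq> E - {e}" using MD DE eM by blast
      then have mE': "matching (E - {e}) M" by (rule matching_mono[OF mM order_refl])
      have mxE': "maximal_matching (E - {e}) M"
      proof (rule maximal_if_cover[OF mE'], rule ballI)
        fix f assume f: "f \<in> (E - {e}) - M"
        show "\<exists>m\<in>M. m \<inter> f \<noteq> {}"
        proof (cases "w \<in> f")
          case False
          then have "f \<in> delete_vertex E w - M" using f unfolding delete_vertex_def by blast
          then obtain m where m: "m \<in> M" "m \<inter> f \<noteq> {}" using maximal_cover[OF M(1)] by blast
          show ?thesis using bexI[of "\<lambda>m. m \<inter> f \<noteq> {}", OF m(2) m(1)] .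
        next
          case True
          have fE': "f \<in> E" using f by blast
          obtain x where x: "x \<in> U" "f = {w,x}" using edge_W[OF bp fE' wW True] by blast
          have xu: "x \<noteq> u" using f x(2) unfolding e_def by (auto simp: insert_commute)
          have xw: "x \<noteq> w" using x(1) wW UW by blast
          have "x \<in> \<Union>M1" using st x(1) mx1 unfolding strong_vertex_def by blast
          then obtain m where m: "m \<in> M1" "x \<in> m" by blast
          have "m \<noteq> e" using m(2) xu xw unfolding e_def by blast
          then have mM': "m \<in> M" using m(1) unfolding M1_def by blast
          have ne: "m \<inter> f \<noteq> {}" using m(2) x(2) by blast
          show ?thesis using bexI[of "\<lambda>m. m \<inter> f \<noteq> {}", OF ne mM'] .
        qed
      qed
      obtain w2 where w2: "w2 \<in> nbhd E u" "w2 \<noteq> w"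
        using deg2[OF bp fE fU conn V c u w] st u by blast
      have e2: "{u,w2} \<in> E" using w2(1) unfolding nbhd_def by simp
      have "matching E {{u,w2}}" unfolding matching_def using e2 by blast
      then obtain M2 where M2: "maximal_matching E M2" "{u,w2} \<in> M2" using extend_maximal[OF fE] by blast
      have m2: "matching E M2" using maximal_matching_m[OF M2(1)] .
      have eM2: "e \<notin> M2"
      proof
        assume eM2: "e \<in> M2"
        have "e \<noteq> {u,w2}" using w2(2) unfolding e_def by (auto simp: doubleton_eq_iff)
        then have "e \<inter> {u,w2} = {}" using matching_disj[OF m2 eM2 M2(2)] by blast
        then show False unfolding e_def by blast
      qed
      have "M2 \<subseteq> E - {e}" using matching_sub[OF m2] eM2 by blast
      then have mE2: "matching (E - {e}) M2" by (rule matching_mono[OF m2 order_refl])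
      have mxE2: "maximal_matching (E - {e}) M2"
      proof (rule maximal_if_cover[OF mE2], rule ballI)
        fix f assume f: "f \<in> (E - {e}) - M2"
        then have "f \<in> E" "f \<notin> M2" by blast+
        then obtain m where m: "m \<in> M2" "m \<inter> f \<noteq> {}" using maximal_cover[OF M2(1)] by blast
        show "\<exists>m\<in>M2. m \<inter> f \<noteq> {}" using bexI[of "\<lambda>m. m \<inter> f \<noteq> {}", OF m(2) m(1)] .
      qed
      have "card M = card M2" using eqe mxE' mxE2 unfolding equimatchable_def by blast
      then show False using cU[OF M2(1)] cM by simp
    qed
  qed
  then show "square_strong E u" using st u unfolding square_strong_def by blast
qed

theorem proposition5p3:
  fixes V U W :: "'a set" and E :: "'a set set"
  assumes "simple_graph V E"
    and "connected_graph V E"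
    and "bipartition V E U W"
    and "card U < card W"
  shows "(edge_stable_equimatchable E \<longleftrightarrow> (\<forall>u\<in>U. square_strong E u))
       \<and> ((\<forall>u\<in>U. square_strong E u) \<longleftrightarrow>
          (\<forall>u\<in>U. \<exists>S. S \<noteq> {} \<and> S \<subseteq> nbhd E u \<and> card (nbhd_set E S) \<le> card S - 1))"
proof -
  have s: "bip U W E \<and> finite E \<and> finite U \<and> finite W" using graph_basics[OF assms(1,3)] .
  then have bp: "bip U W E" and fE: "finite E" and fU: "finite U" and fW: "finite W" by auto
  have V: "U \<union> W = V" using assms(3) unfolding bipartition_def by blast
  have A: "edge_stable_equimatchable E \<longleftrightarrow> (\<forall>u\<in>U. square_strong E u)"
    using ii_i[OF bp fE] i_ii[OF bp fE fU fW assms(2) V assms(4)] by blast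
  have B: "(\<forall>u\<in>U. square_strong E u) \<longleftrightarrow>
          (\<forall>u\<in>U. \<exists>S. S \<noteq> {} \<and> S \<subseteq> nbhd E u \<and> card (nbhd_set E S) \<le> card S - 1)"
  proof
    assume "\<forall>u\<in>U. square_strong E u"
    then show "\<forall>u\<in>U. \<exists>S. S \<noteq> {} \<and> S \<subseteq> nbhd E u \<and> card (nbhd_set E S) \<le> card S - 1"
      using ii_iii[OF bp fE] by blast
  next
    assume h: "\<forall>u\<in>U. \<exists>S. S \<noteq> {} \<and> S \<subseteq> nbhd E u \<and> card (nbhd_set E S) \<le> card S - 1"
    show "\<forall>u\<in>U. square_strong E u"
    proof
      fix u assume u: "u \<in> U"
      then obtain S where "S \<noteq> {}" "S \<subseteq> nbhd E u" "card (nbhd_set E S) \<le> card S - 1" using h by blast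
      then show "square_strong E u" using iii_ii[OF bp fE u] by blast
    qed
  qed
  show ?thesis using A B by blast
qed


end
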